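(* For any finite graph $G$ and any $\varepsilon>0$, the convexity space $\mathcal{C}(G)$ has weak $\varepsilon$-nets of size at most $(480/\varepsilon)^{8\nu_{\mathrm{bi}}(G)\log(1/\varepsilon)}$. In other words, for any set system $\mathcal{G}\subseteq\mathcal{C}(G)$, $$\tau(\mathcal{G})\le (480\,\tau^*(\mathcal{G}))^{8\nu_{\mathrm{bi}}(G)\log\tau^*(\mathcal{G})}.$$
   Context: Let $X=\mathrm{MIS}(G)$ be the set of maximal independent sets of $G$; for $S\subseteq V(G)$ let $K_S=\{I\in X: S\subseteq I\}$; $\mathcal{C}(G)=\{K_S: S\subseteq V(G)\}$. Given a finitely supported probability measure $\mu$ on $X$, a set $N\subseteq X$ is a weak $\varepsilon$-net for $\mathcal{C}(G)$ with respect to $\mu$ if $N\cap C\ne\emptyset$ for every $C\in\mathcal{C}(G)$ with $\mu(C)\ge\varepsilon$; $\mathcal{C}(G)$ has weak $\varepsilon$-nets of size $m$ if for every finitely supported probability measure $\mu$ on $X$ there is such a net of size at most $m$. $\tau(\mathcal{G})$ is the minimum size of a set $T\subseteq X$ meeting every member of $\mathcal{G}$; $\tau^*(\mathcal{G})$ is the minimum of $\sum_{x\in X}f(x)$ over functions $f:X\to[0,1]$ with $\sum_{x\in A}f(x)\ge1$ for all $A\in\mathcal{G}$. $\nu_{\mathrm{bi}}(G)$ is the largest $t$ such that $G$ has $2t$ distinct vertices $u_1,\dots,u_t,v_1,\dots,v_t$ with $u_iv_j\in E(G)$ iff $i=j$. Logarithms are natural. *)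

theory Defs
  imports Complex_Main
begin

definition finite_graph :: "'a set \<Rightarrow> ('a \<Rightarrow> 'a \<Rightarrow> bool) \<Rightarrow> bool" where
  "finite_graph V E \<longleftrightarrow> finite V \<and> (\<forall>x y. E x y \<longrightarrow> x \<in> V \<and> y \<in> V)
     \<and> (\<forall>x y. E x y \<longrightarrow> E y x) \<and> (\<forall>x. \<not> E x x)"

definition independent :: "'a set \<Rightarrow> ('a \<Rightarrow> 'a \<Rightarrow> bool) \<Rightarrow> 'a set \<Rightarrow> bool" where
  "independent V E I \<longleftrightarrow> I \<subseteq> V \<and> (\<forall>x\<in>I. \<forall>y\<in>I. \<not> E x y)"

definition MIS :: "'a set \<Rightarrow> ('a \<Rightarrow> 'a \<Rightarrow> bool) \<Rightarrow> 'a set set" where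
  "MIS V E = {I. independent V E I \<and> (\<forall>J. independent V E J \<and> I \<subseteq> J \<longrightarrow> J = I)}"

definition Kset :: "'a set \<Rightarrow> ('a \<Rightarrow> 'a \<Rightarrow> bool) \<Rightarrow> 'a set \<Rightarrow> 'a set set" where
  "Kset V E S = {I \<in> MIS V E. S \<subseteq> I}"

definition convex_space :: "'a set \<Rightarrow> ('a \<Rightarrow> 'a \<Rightarrow> bool) \<Rightarrow> 'a set set set" where
  "convex_space V E = {Kset V E S | S. S \<subseteq> V}"

definition fin_prob :: "'b set \<Rightarrow> ('b \<Rightarrow> real) \<Rightarrow> bool" where
  "fin_prob X \<mu> \<longleftrightarrow> (\<forall>x. 0 \<le> \<mu> x) \<and> finite {x. \<mu> x \<noteq> 0}
     \<and> {x. \<mu> x \<noteq> 0} \<subseteq> X \<and> (\<Sum>x\<in>{x. \<mu> x \<noteq> 0}. \<mu> x) = 1"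

definition meas :: "('b \<Rightarrow> real) \<Rightarrow> 'b set \<Rightarrow> real" where
  "meas \<mu> C = (\<Sum>x\<in>C \<inter> {x. \<mu> x \<noteq> 0}. \<mu> x)"

definition weak_eps_net :: "'b set \<Rightarrow> 'b set set \<Rightarrow> ('b \<Rightarrow> real) \<Rightarrow> real \<Rightarrow> 'b set \<Rightarrow> bool" where
  "weak_eps_net X F \<mu> \<epsilon> N \<longleftrightarrow> N \<subseteq> X \<and> (\<forall>C\<in>F. meas \<mu> C \<ge> \<epsilon> \<longrightarrow> N \<inter> C \<noteq> {})"

definition has_weak_eps_nets :: "'b set \<Rightarrow> 'b set set \<Rightarrow> real \<Rightarrow> real \<Rightarrow> bool" where
  "has_weak_eps_nets X F \<epsilon> m \<longleftrightarrow>
     (\<forall>\<mu>. fin_prob X \<mu> \<longrightarrow> (\<exists>N. finite N \<and> real (card N) \<le> m \<and> weak_eps_net X F \<mu> \<epsilon> N))"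

definition bi_witness :: "'a set \<Rightarrow> ('a \<Rightarrow> 'a \<Rightarrow> bool) \<Rightarrow> nat \<Rightarrow> bool" where
  "bi_witness V E t \<longleftrightarrow> (\<exists>u v :: nat \<Rightarrow> 'a.
     u ` {..<t} \<subseteq> V \<and> v ` {..<t} \<subseteq> V \<and>
     inj_on u {..<t} \<and> inj_on v {..<t} \<and> (\<forall>i<t. \<forall>j<t. u i \<noteq> v j) \<and>
     (\<forall>i<t. \<forall>j<t. E (u i) (v j) \<longleftrightarrow> i = j))"

definition nu_bi :: "'a set \<Rightarrow> ('a \<Rightarrow> 'a \<Rightarrow> bool) \<Rightarrow> nat" where
  "nu_bi V E = (GREATEST t. bi_witness V E t)"

end

theory Submission
  imports Defs "HOL-Analysis.Harmonic_Numbers"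
begin

context
  fixes V :: "'a set" and E :: "'a \<Rightarrow> 'a \<Rightarrow> bool"
  assumes G: "finite_graph V E"
begin

lemma finV: "finite V" using G unfolding finite_graph_def by auto
lemma symE: "E x y \<Longrightarrow> E y x" using G unfolding finite_graph_def by auto
lemma irrE: "\<not> E x x" using G unfolding finite_graph_def by auto
lemma EV: "E x y \<Longrightarrow> x \<in> V \<and> y \<in> V" using G unfolding finite_graph_def by auto

lemma MIS_D: "J \<in> MIS V E \<Longrightarrow> J \<subseteq> V \<and> (\<forall>x\<in>J. \<forall>y\<in>J. \<not> E x y)"
  unfolding MIS_def independent_def by auto

lemma MIS_ext: assumes "independent V E A" shows "\<exists>J\<in>MIS V E. A \<subseteq> J"
proof -
  let ?C = "{J. independent V E J \<and> A \<subseteq> J}"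
  have ne: "?C \<noteq> {}" using assms by auto
  have "\<exists>n. (\<exists>J\<in>?C. card J = n) \<and> (\<forall>y. (\<exists>J\<in>?C. card J = y) \<longrightarrow> y \<le> n)"
  proof (rule ex_has_greatest_nat[where b="Suc (card V)"])
    show "\<exists>J\<in>?C. card J = card A" using assms by auto
    show "\<forall>y. (\<exists>J\<in>?C. card J = y) \<longrightarrow> y < Suc (card V)"
    proof (intro allI impI)
      fix y assume "\<exists>J\<in>?C. card J = y"
      then obtain J where "J \<subseteq> V" "card J = y" by (auto simp: independent_def)
      then show "y < Suc (card V)" using card_mono[OF finV, of J] by simp
    qed
  qed
  then obtain J where J: "J \<in> ?C" "\<forall>J'\<in>?C. card J' \<le> card J" by blast
  have "J \<in> MIS V E"
    unfolding MIS_def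
  proof (intro CollectI conjI allI impI)
    show "independent V E J" using J by auto
  next
    fix K assume K0: "independent V E K \<and> J \<subseteq> K"
    then have K: "independent V E K" "J \<subseteq> K" by auto
    then have "K \<in> ?C" using J by auto
    then have "card K \<le> card J" using J by auto
    moreover have "finite K" using K finV by (auto simp: independent_def intro: finite_subset)
    ultimately show "K = J" using K card_seteq by blast
  qed
  then show ?thesis using J by auto
qed

lemma MIS_nbr: assumes "J \<in> MIS V E" "x \<in> V" "x \<notin> J" shows "\<exists>y\<in>J. E x y"
proof (rule ccontr)
  assume "\<not> ?thesis"
  then have "independent V E (insert x J)" using assms MIS_D[OF assms(1)] irrE symE
    unfolding independent_def by blast
  then have "insert x J = J" using assms(1) unfolding MIS_def by blast
  then show False using assms by auto
qed

lemma bi_le_nu: assumes "bi_witness V E t" shows "t \<le> nu_bi V E"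
  unfolding nu_bi_def
proof (rule Greatest_le_nat[where b = "card V"])
  show "bi_witness V E t" by fact
next
  fix y assume "bi_witness V E y"
  then have "\<exists>u. u ` {..<y} \<subseteq> V \<and> inj_on u {..<y}" unfolding bi_witness_def by (elim exE conjE) (intro exI conjI)
  then obtain u where "u ` {..<y} \<subseteq> V" "inj_on u {..<y}" by (elim exE conjE)
  then have "card (u ` {..<y}) \<le> card V" using finV card_mono by blast
  then show "y \<le> card V" using \<open>inj_on u {..<y}\<close> by (simp add: card_image)
qed

lemma pattern_bi:
  fixes x :: "nat \<Rightarrow> 'a" and J :: "nat \<Rightarrow> 'a set"
  assumes t3: "t \<ge> 3" and JM: "\<And>i. i < t \<Longrightarrow> J i \<in> MIS V E"
    and pat: "\<And>i j. i < t \<Longrightarrow> j < t \<Longrightarrow> (x i \<in> J j \<longleftrightarrow> i \<noteq> j)"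
  shows "bi_witness V E t"
proof -
  have xV: "x i \<in> V" if "i < t" for i
  proof -
    obtain j where "j < t" "j \<noteq> i"
    proof (cases "i = 0")
      case True then show ?thesis using that[of 1] t3 by auto
    next
      case False then show ?thesis using that[of 0] t3 by auto
    qed
    then show ?thesis using pat[OF that \<open>j<t\<close>] JM[OF \<open>j<t\<close>] MIS_D by blast
  qed
  define v where "v i = (SOME y. y \<in> J i \<and> E (x i) y)" for i
  have v: "v i \<in> J i \<and> E (x i) (v i)" if "i < t" for i
    unfolding v_def by (rule someI_ex) (use MIS_nbr[OF JM[OF that] xV[OF that]] pat[OF that that] in auto)
  have Eiff: "E (x i) (v j) \<longleftrightarrow> i = j" if "i < t" "j < t" for i j
  proof
    assume "E (x i) (v j)"
    show "i = j"
    proof (rule ccontr)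
      assume "i \<noteq> j"
      then have "x i \<in> J j" using pat that by auto
      then show False using v[OF that(2)] MIS_D[OF JM[OF that(2)]] \<open>E (x i) (v j)\<close> by blast
    qed
  qed (use v that in auto)
  show ?thesis unfolding bi_witness_def
  proof (rule exI[of _ x], rule exI[of _ v], intro conjI)
    show "x ` {..<t} \<subseteq> V" using xV by auto
    have "v i \<in> V" if "i < t" for i using v[OF that] MIS_D[OF JM[OF that]] by auto
    then show "v ` {..<t} \<subseteq> V" by auto
    show "inj_on x {..<t}"
    proof (rule inj_onI)
      fix i j assume "i \<in> {..<t}" "j \<in> {..<t}" "x i = x j"
      then show "i = j" using pat[of i j] pat[of j j] by auto
    qed
    show "inj_on v {..<t}"
    proof (rule inj_onI)
      fix i j assume "i \<in> {..<t}" "j \<in> {..<t}" "v i = v j"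
      then show "i = j" using Eiff[of i j] Eiff[of i i] by auto
    qed
    show "\<forall>i<t. \<forall>j<t. x i \<noteq> v j"
    proof (intro allI impI)
      fix i j assume ij: "i < t" "j < t"
      show "x i \<noteq> v j"
      proof
        assume eq: "x i = v j"
        have "i \<noteq> j" using eq v[OF ij(2)] irrE by metis
        obtain k where k: "k < t" "k \<noteq> i" "k \<noteq> j"
        proof -
          have "{..<t} - {i, j} \<noteq> {}"
          proof
            assume "{..<t} - {i, j} = {}"
            then have "{..<t} \<subseteq> {i,j}" by auto
            then have "card {..<t} \<le> card {i,j}" by (intro card_mono) auto
            also have "\<dots> \<le> 2" by (simp add: card_insert_le_m1)
            finally show False using t3 by simp
          qed
          then show ?thesis using that by blast
        qed
        have "x i \<in> J k" "x j \<in> J k" using pat k ij by auto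
        moreover have "E (x j) (x i)" using eq v[OF ij(2)] by simp
        ultimately show False using MIS_D[OF JM[OF k(1)]] by blast
      qed
    qed
    show "\<forall>i<t. \<forall>j<t. E (x i) (v j) = (i = j)" using Eiff by auto
  qed
qed

end

lemma meas_nonneg: "(\<forall>x. 0 \<le> \<mu> x) \<Longrightarrow> 0 \<le> meas \<mu> C"
  unfolding meas_def by (simp add: sum_nonneg)

lemma meas_mono: "(\<forall>x. 0 \<le> \<mu> x) \<Longrightarrow> finite {x. \<mu> x \<noteq> 0} \<Longrightarrow> A \<subseteq> B \<Longrightarrow> meas \<mu> A \<le> meas \<mu> B"
  unfolding meas_def by (rule sum_mono2) auto

lemma meas_union_inter: "finite {x. \<mu> x \<noteq> 0} \<Longrightarrow> meas \<mu> (A \<union> B) + meas \<mu> (A \<inter> B) = meas \<mu> A + meas \<mu> B"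
proof -
  assume f: "finite {x. \<mu> x \<noteq> 0}"
  have "sum \<mu> ((A \<inter> {x. \<mu> x \<noteq> 0}) \<union> (B \<inter> {x. \<mu> x \<noteq> 0})) + sum \<mu> ((A \<inter> {x. \<mu> x \<noteq> 0}) \<inter> (B \<inter> {x. \<mu> x \<noteq> 0}))
      = sum \<mu> (A \<inter> {x. \<mu> x \<noteq> 0}) + sum \<mu> (B \<inter> {x. \<mu> x \<noteq> 0})"
    by (rule sum.union_inter) (use f in auto)
  moreover have "(A \<inter> {x. \<mu> x \<noteq> 0}) \<union> (B \<inter> {x. \<mu> x \<noteq> 0}) = (A \<union> B) \<inter> {x. \<mu> x \<noteq> 0}" by auto
  moreover have "(A \<inter> {x. \<mu> x \<noteq> 0}) \<inter> (B \<inter> {x. \<mu> x \<noteq> 0}) = (A \<inter> B) \<inter> {x. \<mu> x \<noteq> 0}" by auto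
  ultimately show ?thesis unfolding meas_def by simp
qed

lemma meas_union_le: "(\<forall>x. 0 \<le> \<mu> x) \<Longrightarrow> finite {x. \<mu> x \<noteq> 0} \<Longrightarrow> meas \<mu> (A \<union> B) \<le> meas \<mu> A + meas \<mu> B"
proof -
  assume a: "\<forall>x. 0 \<le> \<mu> x" "finite {x. \<mu> x \<noteq> 0}"
  show ?thesis using meas_union_inter[of \<mu> A B, OF a(2)] meas_nonneg[of \<mu> "A \<inter> B", OF a(1)] by linarith
qed

lemma meas_le_one: "fin_prob X \<mu> \<Longrightarrow> meas \<mu> C \<le> 1"
proof -
  assume fp: "fin_prob X \<mu>"
  have "meas \<mu> C \<le> meas \<mu> UNIV" using fp by (intro meas_mono) (auto simp: fin_prob_def)
  also have "\<dots> = 1" using fp by (simp add: meas_def fin_prob_def)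
  finally show ?thesis .
qed

lemma meas_pos_ex: "meas \<mu> C > 0 \<Longrightarrow> \<exists>x\<in>C. \<mu> x \<noteq> 0"
proof (rule ccontr)
  assume "meas \<mu> C > 0" "\<not> (\<exists>x\<in>C. \<mu> x \<noteq> 0)"
  then have "C \<inter> {x. \<mu> x \<noteq> 0} = {}" by auto
  then show False using \<open>meas \<mu> C > 0\<close> unfolding meas_def by simp
qed

lemma greedy_hit:
  fixes D :: "'i \<Rightarrow> 'b set" and \<mu> :: "'b \<Rightarrow> real"
  assumes nn: "\<forall>x. 0 \<le> \<mu> x" and fs: "finite {x. \<mu> x \<noteq> 0}" and s1: "sum \<mu> {x. \<mu> x \<noteq> 0} = 1"
    and d: "0 < \<delta>" "\<delta> \<le> 1"
  shows "finite I \<Longrightarrow> (\<forall>i\<in>I. meas \<mu> (D i) > \<delta>) \<Longrightarrow> real (card I) * (1 - \<delta>) ^ k < 1 \<Longrightarrow>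
     \<exists>P. P \<subseteq> {x. \<mu> x \<noteq> 0} \<and> card P \<le> k \<and> (\<forall>i\<in>I. P \<inter> D i \<noteq> {})"
proof (induction k arbitrary: I)
  case 0
  then have "I = {}" by simp
  then show ?case by (intro exI[of _ "{}"]) auto
next
  case (Suc k)
  show ?case
  proof (cases "I = {}")
    case True then show ?thesis by (intro exI[of _ "{}"]) auto
  next
    case False
    let ?S = "{x. \<mu> x \<noteq> 0}"
    let ?c = "\<lambda>p. card {i\<in>I. p \<in> D i}"
    have cnt: "real (?c p) = (\<Sum>i\<in>I. if p \<in> D i then 1 else 0)" for p
    proof -
      have "(\<Sum>i\<in>I. if p \<in> D i then 1 else 0) = real (card (I \<inter> {i. p \<in> D i}))"
        using Suc.prems(1) by (simp add: sum.If_cases)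
      moreover have "I \<inter> {i. p \<in> D i} = {i\<in>I. p \<in> D i}" by auto
      ultimately show ?thesis by simp
    qed
    have "(\<Sum>p\<in>?S. \<mu> p * real (?c p)) = (\<Sum>p\<in>?S. \<Sum>i\<in>I. \<mu> p * (if p \<in> D i then 1 else 0))"
      by (simp add: cnt sum_distrib_left)
    also have "\<dots> = (\<Sum>i\<in>I. \<Sum>p\<in>?S. \<mu> p * (if p \<in> D i then 1 else 0))"
      by (rule sum.swap)
    also have "\<dots> = (\<Sum>i\<in>I. meas \<mu> (D i))"
    proof (rule sum.cong[OF refl])
      fix i
      have "(\<Sum>p\<in>?S. \<mu> p * (if p \<in> D i then 1 else 0)) = (\<Sum>p\<in>?S. if p \<in> D i then \<mu> p else 0)"
        by (rule sum.cong) auto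
      also have "\<dots> = sum \<mu> (?S \<inter> D i)" using fs by (simp add: sum.If_cases Int_def)
      also have "\<dots> = meas \<mu> (D i)" unfolding meas_def by (simp add: Int_commute)
      finally show "(\<Sum>p\<in>?S. \<mu> p * (if p \<in> D i then 1 else 0)) = meas \<mu> (D i)" .
    qed
    also have "\<dots> > (\<Sum>i\<in>I. \<delta>)"
      using False Suc.prems(1,2) by (intro sum_strict_mono) auto
    finally have big: "(\<Sum>p\<in>?S. \<mu> p * real (?c p)) > \<delta> * real (card I)" by (simp add: mult.commute)
    obtain p where p: "p \<in> ?S" "real (?c p) \<ge> \<delta> * real (card I)"
    proof (rule ccontr)
      assume "\<not> thesis"
      then have lt: "\<forall>p\<in>?S. real (?c p) < \<delta> * real (card I)" using that by force
      have "(\<Sum>p\<in>?S. \<mu> p * real (?c p)) \<le> (\<Sum>p\<in>?S. \<mu> p * (\<delta> * real (card I)))"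
        using lt nn by (intro sum_mono mult_left_mono) (auto simp: less_imp_le)
      also have "\<dots> = \<delta> * real (card I)" using s1 by (simp add: sum_distrib_right[symmetric])
      finally show False using big by simp
    qed
    let ?I' = "{i\<in>I. p \<notin> D i}"
    have fI': "finite ?I'" using Suc.prems(1) by simp
    have cI: "card I = card ?I' + ?c p"
    proof -
      have "I = ?I' \<union> {i\<in>I. p \<in> D i}" by auto
      then have "card I = card (?I' \<union> {i\<in>I. p \<in> D i})" by simp
      also have "\<dots> = card ?I' + ?c p" using Suc.prems(1) by (intro card_Un_disjoint) auto
      finally show ?thesis .
    qed
    have "real (card ?I') \<le> (1 - \<delta>) * real (card I)" using cI p(2) by (simp add: algebra_simps)
    then have "real (card ?I') * (1 - \<delta>) ^ k \<le> (1 - \<delta>) * real (card I) * (1 - \<delta>) ^ k"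
      using d by (intro mult_right_mono) auto
    also have "\<dots> = real (card I) * (1 - \<delta>) ^ Suc k" by simp
    also have "\<dots> < 1" by fact
    finally have "real (card ?I') * (1 - \<delta>) ^ k < 1" .
    from Suc.IH[OF fI' _ this] Suc.prems(2) obtain P where
      P: "P \<subseteq> ?S" "card P \<le> k" "\<forall>i\<in>?I'. P \<inter> D i \<noteq> {}" by auto
    show ?thesis
    proof (intro exI[of _ "insert p P"] conjI)
      show "insert p P \<subseteq> ?S" using P p by auto
      have "finite P" using P(1) fs finite_subset by blast
      then show "card (insert p P) \<le> Suc k" using P(2) by (simp add: card_insert_if)
      show "\<forall>i\<in>I. insert p P \<inter> D i \<noteq> {}" using P(3) by auto
    qed
  qed
qed

lemma dominate:
  assumes "finite C" "\<And>c. c \<in> C \<Longrightarrow> dm c c"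
  shows "\<exists>R\<subseteq>C. (\<forall>c\<in>C. \<exists>r\<in>R. dm c r) \<and> (\<forall>r\<in>R. \<forall>r'\<in>R. r \<noteq> r' \<longrightarrow> \<not> dm r r' \<or> \<not> dm r' r)"
  using assms
proof (induction "card C" arbitrary: C rule: less_induct)
  case less
  show ?case
  proof (cases "C = {}")
    case True then show ?thesis by auto
  next
    case False
    then obtain r where r: "r \<in> C" by auto
    let ?C' = "{c\<in>C. \<not> dm c r}"
    have "?C' \<subset> C" using r less.prems(2)[OF r] by auto
    then have "card ?C' < card C" using less.prems(1) by (simp add: psubset_card_mono)
    from less.hyps[OF this] less.prems obtain R' where R': "R' \<subseteq> ?C'" "\<forall>c\<in>?C'. \<exists>r\<in>R'. dm c r"
      "\<forall>r\<in>R'. \<forall>r'\<in>R'. r \<noteq> r' \<longrightarrow> \<not> dm r r' \<or> \<not> dm r' r" by auto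
    show ?thesis
    proof (intro exI[of _ "insert r R'"] conjI)
      show "insert r R' \<subseteq> C" using R'(1) r by auto
      show "\<forall>c\<in>C. \<exists>r\<in>insert r R'. dm c r" using R'(2) by blast
      show "\<forall>ra\<in>insert r R'. \<forall>r'\<in>insert r R'. ra \<noteq> r' \<longrightarrow> \<not> dm ra r' \<or> \<not> dm r' ra"
        using R'(1,3) by blast
    qed
  qed
qed

definition shatters :: "'b set set \<Rightarrow> 'b set \<Rightarrow> bool" where
  "shatters FF Q \<longleftrightarrow> (\<forall>A\<subseteq>Q. \<exists>F\<in>FF. F \<inter> Q = A)"

lemma pajor:
  "finite P \<Longrightarrow> FF \<subseteq> Pow P \<Longrightarrow> card FF \<le> card {Q. Q \<subseteq> P \<and> shatters FF Q}"
proof (induction P arbitrary: FF rule: finite_induct)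
  case empty
  show ?case
  proof (cases "FF = {}")
    case True then show ?thesis by simp
  next
    case False
    then have "FF = {{}}" using empty by auto
    moreover have "shatters {{}} {}" unfolding shatters_def by auto
    ultimately have "{Q. Q \<subseteq> {} \<and> shatters FF Q} = {{}}" by auto
    then show ?thesis using \<open>FF = {{}}\<close> by (simp only: card.empty card_insert_disjoint)
  qed
next
  case (insert a P)
  let ?F0 = "(\<lambda>F. F - {a}) ` FF"
  let ?F1 = "{G. G \<subseteq> P \<and> G \<in> FF \<and> insert a G \<in> FF}"
  let ?Fa = "{F\<in>FF. a \<in> F}" and ?Fn = "{F\<in>FF. a \<notin> F}"
  have "finite (Pow (insert a P))" using insert.hyps(1) by simp
  then have finFF: "finite FF" using insert.prems by (rule finite_subset[rotated])
  have FFs: "FF = ?Fn \<union> ?Fa" by blast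
  have Fn_id: "(\<lambda>F. F - {a}) ` ?Fn = ?Fn"
  proof (rule set_eqI)
    fix G show "G \<in> (\<lambda>F. F - {a}) ` ?Fn \<longleftrightarrow> G \<in> ?Fn"
    proof
      assume "G \<in> (\<lambda>F. F - {a}) ` ?Fn"
      then obtain F where "F \<in> ?Fn" "G = F - {a}" by blast
      then show "G \<in> ?Fn" by simp
    next
      assume G: "G \<in> ?Fn"
      then have "G = G - {a}" by simp
      then show "G \<in> (\<lambda>F. F - {a}) ` ?Fn" using G by blast
    qed
  qed
  have F0: "?F0 = ?Fn \<union> (\<lambda>F. F - {a}) ` ?Fa"
  proof -
    have "?F0 = (\<lambda>F. F - {a}) ` (?Fn \<union> ?Fa)" using FFs by simp
    also have "\<dots> = (\<lambda>F. F - {a}) ` ?Fn \<union> (\<lambda>F. F - {a}) ` ?Fa" by (rule image_Un)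
    finally show ?thesis using Fn_id by simp
  qed
  have F1: "?Fn \<inter> (\<lambda>F. F - {a}) ` ?Fa = ?F1"
  proof
    show "?Fn \<inter> (\<lambda>F. F - {a}) ` ?Fa \<subseteq> ?F1"
    proof
      fix G assume "G \<in> ?Fn \<inter> (\<lambda>F. F - {a}) ` ?Fa"
      then obtain F where F: "F \<in> FF" "a \<in> F" "G = F - {a}" "G \<in> FF" "a \<notin> G" by auto
      then have "insert a G = F" by auto
      moreover have "G \<subseteq> P" using F insert.prems by auto
      ultimately show "G \<in> ?F1" using F by auto
    qed
  next
    show "?F1 \<subseteq> ?Fn \<inter> (\<lambda>F. F - {a}) ` ?Fa"
    proof
      fix G assume G: "G \<in> ?F1"
      then have "a \<notin> G" using insert.hyps(2) by auto
      moreover have "G = insert a G - {a}" using \<open>a \<notin> G\<close> by auto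
      ultimately show "G \<in> ?Fn \<inter> (\<lambda>F. F - {a}) ` ?Fa" using G by blast
    qed
  qed
  have injA: "inj_on (\<lambda>F. F - {a}) ?Fa"
    by (rule inj_onI) (metis (no_types, lifting) insert_Diff mem_Collect_eq)
  have "card ?F0 + card ?F1 = card ?Fn + card ((\<lambda>F. F - {a}) ` ?Fa)"
    unfolding F0 F1[symmetric] by (rule card_Un_Int[symmetric]) (use finFF in auto)
  also have "\<dots> = card ?Fn + card ?Fa" using injA by (simp add: card_image)
  also have "\<dots> = card FF"
  proof -
    have "FF = ?Fn \<union> ?Fa" by auto
    then have "card FF = card (?Fn \<union> ?Fa)" by simp
    also have "\<dots> = card ?Fn + card ?Fa" using finFF by (intro card_Un_disjoint) auto
    finally show ?thesis by simp
  qed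
  finally have cFF: "card FF = card ?F0 + card ?F1" by simp
  let ?sh = "\<lambda>G. {Q. Q \<subseteq> P \<and> shatters G Q}"
  have "?F0 \<subseteq> Pow P" using insert.prems insert.hyps(2) by auto
  then have ih0: "card ?F0 \<le> card (?sh ?F0)" using insert.IH by blast
  have "?F1 \<subseteq> Pow P" by auto
  then have ih1: "card ?F1 \<le> card (?sh ?F1)" using insert.IH by blast
  let ?S = "{Q. Q \<subseteq> insert a P \<and> shatters FF Q}"
  have s0: "?sh ?F0 \<subseteq> ?S"
  proof
    fix Q assume Q: "Q \<in> ?sh ?F0"
    then have aQ: "a \<notin> Q" using insert.hyps(2) by auto
    have "shatters FF Q" unfolding shatters_def
    proof (intro allI impI)
      fix A assume "A \<subseteq> Q"
      then obtain G where "G \<in> ?F0" "G \<inter> Q = A" using Q unfolding shatters_def by blast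
      then obtain F where "F \<in> FF" "(F - {a}) \<inter> Q = A" by auto
      then show "\<exists>F\<in>FF. F \<inter> Q = A" using aQ by (intro bexI[of _ F]) auto
    qed
    then show "Q \<in> ?S" using Q by auto
  qed
  have s1: "insert a ` ?sh ?F1 \<subseteq> ?S"
  proof
    fix Q' assume "Q' \<in> insert a ` ?sh ?F1"
    then obtain Q where Q: "Q \<subseteq> P" "shatters ?F1 Q" "Q' = insert a Q" by auto
    have "shatters FF (insert a Q)" unfolding shatters_def
    proof (intro allI impI)
      fix A assume A: "A \<subseteq> insert a Q"
      then have "A - {a} \<subseteq> Q" by blast
      from Q(2)[unfolded shatters_def, rule_format, OF this]
      obtain G where G: "G \<in> ?F1" "G \<inter> Q = A - {a}" by (elim bexE) simp
      have aG: "a \<notin> G" using G insert.hyps(2) by auto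
      show "\<exists>F\<in>FF. F \<inter> insert a Q = A"
      proof (cases "a \<in> A")
        case True
        then show ?thesis using G aG A by (intro bexI[of _ "insert a G"]) auto
      next
        case False
        then show ?thesis using G aG A by (intro bexI[of _ G]) auto
      qed
    qed
    then show "Q' \<in> ?S" using Q by auto
  qed
  have disj: "?sh ?F0 \<inter> insert a ` ?sh ?F1 = {}" using insert.hyps(2) by auto
  have injI: "inj_on (insert a) (?sh ?F1)"
    by (rule inj_onI) (metis (no_types, lifting) insert.hyps(2) Diff_insert_absorb mem_Collect_eq subset_iff)
  have finS: "finite ?S" using insert.hyps(1) by simp
  have finsh: "finite (?sh G)" for G using insert.hyps(1) by simp
  have "card FF \<le> card (?sh ?F0) + card (?sh ?F1)" using cFF ih0 ih1 by simp
  also have "\<dots> = card (?sh ?F0) + card (insert a ` ?sh ?F1)" using injI by (simp add: card_image)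
  also have "\<dots> = card (?sh ?F0 \<union> insert a ` ?sh ?F1)" using disj finsh by (intro card_Un_disjoint[symmetric]) auto
  also have "\<dots> \<le> card ?S" using s0 s1 finS by (intro card_mono) auto
  finally show ?case .
qed

lemma shatters_sub: "shatters FF Q \<Longrightarrow> Q' \<subseteq> Q \<Longrightarrow> shatters FF Q'"
  unfolding shatters_def
proof (intro allI impI)
  fix A assume sh: "\<forall>A\<subseteq>Q. \<exists>F\<in>FF. F \<inter> Q = A" and Q': "Q' \<subseteq> Q" and A: "A \<subseteq> Q'"
  then obtain F where "F \<in> FF" "F \<inter> Q = A" by (meson order_trans)
  then show "\<exists>F\<in>FF. F \<inter> Q' = A" using Q' A by (intro bexI[of _ F]) auto
qed

lemma sauer:
  assumes "finite P" "FF \<subseteq> Pow P" "\<And>Q. Q \<subseteq> P \<Longrightarrow> card Q = Suc d \<Longrightarrow> \<not> shatters FF Q"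
  shows "card FF \<le> (\<Sum>i\<le>d. card P choose i)"
proof -
  have sub: "{Q. Q \<subseteq> P \<and> shatters FF Q} \<subseteq> (\<Union>i\<in>{..d}. {Q. Q \<subseteq> P \<and> card Q = i})"
  proof
    fix Q assume Q: "Q \<in> {Q. Q \<subseteq> P \<and> shatters FF Q}"
    have "card Q \<le> d"
    proof (rule ccontr)
      assume "\<not> card Q \<le> d"
      then obtain Q' where "Q' \<subseteq> Q" "card Q' = Suc d"
        using obtain_subset_with_card_n[of "Suc d" Q] by auto
      then show False using assms(3)[of Q'] Q shatters_sub by blast
    qed
    then show "Q \<in> (\<Union>i\<in>{..d}. {Q. Q \<subseteq> P \<and> card Q = i})" using Q by auto
  qed
  have "card FF \<le> card {Q. Q \<subseteq> P \<and> shatters FF Q}" using pajor assms by blast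
  also have "\<dots> \<le> card (\<Union>i\<in>{..d}. {Q. Q \<subseteq> P \<and> card Q = i})"
    using sub assms(1) by (intro card_mono) auto
  also have "\<dots> = (\<Sum>i\<le>d. card {Q. Q \<subseteq> P \<and> card Q = i})"
    using assms(1) by (intro card_UN_disjoint) auto
  also have "\<dots> = (\<Sum>i\<le>d. card P choose i)" using n_subsets[OF assms(1)] by simp
  finally show ?thesis .
qed

lemma sum_choose_bound:
  fixes k d :: nat assumes d: "d \<ge> 1"
  shows "real (\<Sum>i\<le>d. k choose i) \<le> (exp 1 * real (max k d) / real d) ^ d"
proof (cases "k \<le> d")
  case True
  have "(\<Sum>i\<le>d. k choose i) = (\<Sum>i\<le>k. k choose i)"
  proof -
    have "{..d} = {..k} \<union> {k<..d}" using True by auto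
    then have "(\<Sum>i\<le>d. k choose i) = (\<Sum>i\<le>k. k choose i) + (\<Sum>i\<in>{k<..d}. k choose i)"
    proof -
      have "(\<Sum>i\<in>{..k} \<union> {k<..d}. k choose i) = (\<Sum>i\<le>k. k choose i) + (\<Sum>i\<in>{k<..d}. k choose i)"
        by (rule sum.union_disjoint) auto
      then show ?thesis using \<open>{..d} = {..k} \<union> {k<..d}\<close> by simp
    qed
    also have "(\<Sum>i\<in>{k<..d}. k choose i) = 0" by (intro sum.neutral) auto
    finally show ?thesis by simp
  qed
  also have "\<dots> = 2 ^ k" by (rule choose_row_sum)
  finally have "real (\<Sum>i\<le>d. k choose i) = 2 ^ k" by simp
  also have "\<dots> \<le> 2 ^ d" using True by (intro power_increasing) auto
  also have "\<dots> \<le> exp 1 ^ d" using exp_ge_add_one_self[of 1] by (intro power_mono) auto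
  also have "\<dots> = (exp 1 * real (max k d) / real d) ^ d" using True d by simp
  finally show ?thesis .
next
  case False
  then have kd: "d < k" by simp
  let ?q = "real k / real d"
  have q1: "?q \<ge> 1" using kd d by simp
  have "real (\<Sum>i\<le>d. k choose i) = (\<Sum>i\<le>d. real (k choose i))" by simp
  also have "\<dots> \<le> (\<Sum>i\<le>d. real (k choose i) * ?q ^ (d - i))"
  proof (rule sum_mono)
    fix i
    have "1 \<le> ?q ^ (d - i)" by (rule one_le_power[OF q1])
    then have "real (k choose i) * 1 \<le> real (k choose i) * ?q ^ (d - i)" by (intro mult_left_mono) auto
    then show "real (k choose i) \<le> real (k choose i) * ?q ^ (d - i)" by simp
  qed
  also have "\<dots> = (\<Sum>i\<le>d. ?q ^ d * (real (k choose i) * (real d / real k) ^ i))"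
  proof (rule sum.cong[OF refl])
    fix i assume "i \<in> {..d}"
    then have "?q ^ d = ?q ^ (d - i) * ?q ^ i" by (simp add: power_add[symmetric])
    moreover have "?q ^ i * (real d / real k) ^ i = 1" using kd d
      by (simp add: power_mult_distrib[symmetric])
    ultimately show "real (k choose i) * ?q ^ (d - i) = ?q ^ d * (real (k choose i) * (real d / real k) ^ i)"
      by (metis (no_types, lifting) mult.assoc mult.commute mult.right_neutral)
  qed
  also have "\<dots> = ?q ^ d * (\<Sum>i\<le>d. real (k choose i) * (real d / real k) ^ i)"
    by (simp add: sum_distrib_left)
  also have "\<dots> \<le> ?q ^ d * (\<Sum>i\<le>k. real (k choose i) * (real d / real k) ^ i)"
    using kd by (intro mult_left_mono sum_mono2) auto
  also have "(\<Sum>i\<le>k. real (k choose i) * (real d / real k) ^ i) \<le> exp 1 ^ d"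
  proof -
    have "(\<Sum>i\<le>k. real (k choose i) * (real d / real k) ^ i) = (real d / real k + 1) ^ k"
      using binomial_ring[of "real d / real k" 1 k] by simp
    also have "\<dots> \<le> exp (real d / real k) ^ k"
      using exp_ge_add_one_self[of "real d / real k"] by (intro power_mono) (auto simp: add.commute)
    also have "\<dots> = exp 1 ^ d"
      using kd by (simp add: exp_of_nat_mult[symmetric])
    finally show ?thesis .
  qed
  finally have "real (\<Sum>i\<le>d. k choose i) \<le> ?q ^ d * exp 1 ^ d" using q1 by simp
  also have "\<dots> = (exp 1 * real (max k d) / real d) ^ d" using kd
    by (simp add: power_mult_distrib[symmetric] max_def mult.commute)
  finally show ?thesis .
qed

lemma ln_le_div_e: "0 < (x::real) \<Longrightarrow> ln x \<le> x / exp 1"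
proof -
  assume x: "0 < x"
  have "ln (x / exp 1) \<le> x / exp 1 - 1" by (rule ln_le_minus_one) (use x in simp)
  moreover have "ln (x / exp 1) = ln x - 1" using x by (simp add: ln_div)
  ultimately show ?thesis by simp
qed

lemma pack_num:
  fixes M d k :: nat and \<delta> :: real
  assumes d0: "0 < \<delta>" "\<delta> \<le> 1/2" and d1: "d \<ge> 1" and M2: "M \<ge> 2"
    and kb: "real k \<le> 2 * ln (real M) / \<delta> + 1"
    and Mb: "real M \<le> (exp 1 * real (max k d) / real d) ^ d"
  shows "real M \<le> (5 / \<delta>) ^ (2 * d)"
proof -
  define z where "z = 25 / \<delta>^2"
  have zeq: "(5 / \<delta>) ^ (2 * d) = z ^ d" unfolding z_def
    by (simp add: power_mult power_divide)
  have e3: "exp 1 \<le> (3::real)" by (rule exp_le)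
  have dd0: "\<delta>^2 > 0" using d0 by simp
  have dd1: "\<delta>^2 \<le> 1/4" using d0 power_mono[of \<delta> "1/2" 2] by (simp add: power2_eq_square)
  have z25: "z \<ge> 100" unfolding z_def using dd0 dd1 by (simp add: pos_le_divide_eq)
  show ?thesis
  proof (cases "k \<le> d")
    case True
    then have "real M \<le> exp 1 ^ d" using Mb d1 by (simp add: max_def)
    also have "\<dots> \<le> z ^ d" using e3 z25 by (intro power_mono) auto
    finally show ?thesis using zeq by simp
  next
    case False
    then have Mb': "real M \<le> (exp 1 * real k / real d) ^ d" using Mb by (simp add: max_def)
    show ?thesis
    proof (rule ccontr)
      assume "\<not> ?thesis"
      then have Mz: "real M > z ^ d" using zeq by simp
      define y where "y = root d (real M)"
      have dpos: "0 < d" using d1 by simp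
      have yd: "y ^ d = real M" unfolding y_def using dpos by simp
      have z0: "z > 0" using z25 by simp
      have y0: "y \<ge> 0" unfolding y_def by (intro real_root_ge_zero) simp
      have "z ^ d < y ^ d" using Mz yd by simp
      then have yz: "y > z" using power_less_imp_less_base[of z d y] y0 by blast
      then have ypos: "y > 0" using z0 by simp
      have lnM: "ln (real M) = real d * ln y" using yd ln_realpow[of y d] by simp
      have "y \<le> exp 1 * real k / real d"
      proof -
        obtain d' where "d = Suc d'" using dpos by (cases d) auto
        then show ?thesis using yd Mb' power_le_imp_le_base[of y d' "exp 1 * real k / real d"] by simp
      qed
      also have "\<dots> \<le> exp 1 * (2 * ln (real M) / \<delta> + 1) / real d"
        using kb d1 by (intro divide_right_mono mult_left_mono) auto
      also have "\<dots> = (2 * exp 1 / \<delta>) * ln y + exp 1 / real d"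
        using lnM d1 d0 by (simp add: field_simps)
      also have "\<dots> \<le> (2 * exp 1 / \<delta>) * ln y + exp 1"
        using d1 by (simp add: divide_le_eq)
      finally have y1: "y - (2 * exp 1 / \<delta>) * ln y \<le> exp 1" by simp
      define c where "c = 2 * exp 1 / \<delta>"
      have c0: "c \<ge> 0" unfolding c_def using d0 by simp
      have cz: "c \<le> z"
      proof -
        have "c = (2 * exp 1 * \<delta>) / \<delta>^2" unfolding c_def using d0 by (simp add: power2_eq_square)
        moreover have "2 * exp 1 * \<delta> \<le> 25"
        proof -
          have "2 * exp 1 * \<delta> \<le> 2 * 3 * 1" using e3 d0 by (intro mult_mono) auto
          then show ?thesis by linarith
        qed
        ultimately show ?thesis unfolding z_def using dd0 by (simp add: divide_right_mono)
      qed
      have "ln (y / z) \<le> y / z - 1" using ypos z0 by (intro ln_le_minus_one) simp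
      then have "ln y - ln z \<le> y / z - 1" using ypos z0 by (simp add: ln_div)
      then have "c * (ln y - ln z) \<le> c * (y / z - 1)" using c0 by (intro mult_left_mono) auto
      also have "\<dots> \<le> z * (y / z - 1)" using cz yz z0 by (intro mult_right_mono) auto
      also have "\<dots> = y - z" using z0 by (simp add: field_simps)
      finally have A1: "y - c * ln y \<ge> z - c * ln z" by (simp add: algebra_simps)
      have "ln z = 2 * ln (5 / \<delta>)"
      proof -
        have "25 / \<delta>^2 = (5 / \<delta>)^2" by (simp add: power_divide)
        then show "ln z = 2 * ln (5 / \<delta>)" unfolding z_def using ln_realpow[of "5/\<delta>" 2] by simp
      qed
      also have "\<dots> \<le> 2 * ((5 / \<delta>) / exp 1)" using d0 ln_le_div_e[of "5/\<delta>"] by simp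
      finally have "c * ln z \<le> c * (2 * ((5 / \<delta>) / exp 1))" using c0 by (intro mult_left_mono) auto
      also have "\<dots> = 20 / \<delta>^2" unfolding c_def using d0 by (simp add: field_simps power2_eq_square)
      finally have cl: "c * ln z \<le> 20 / \<delta>^2" .
      have "25 / \<delta>^2 - 20 / \<delta>^2 = 5 / \<delta>^2" by (simp add: diff_divide_distrib[symmetric])
      then have "z - c * ln z \<ge> 5 / \<delta>^2" using cl unfolding z_def by linarith
      moreover have "5 / \<delta>^2 \<ge> 20" using dd0 dd1 by (simp add: pos_le_divide_eq)
      ultimately show False using A1 y1 e3 unfolding c_def by linarith
    qed
  qed
qed

definition Fs :: "'a \<Rightarrow> 'a set set \<Rightarrow> 'a set set" where "Fs x Y = {J\<in>Y. x \<in> J}"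
definition Aset :: "'a set \<Rightarrow> ('a set \<Rightarrow> real) \<Rightarrow> 'a set set \<Rightarrow> 'a set" where
  "Aset V \<mu> Y = {x\<in>V. meas \<mu> (Fs x Y) > meas \<mu> Y / 2}"

context
  fixes V :: "'a set" and E :: "'a \<Rightarrow> 'a \<Rightarrow> bool" and \<mu> :: "'a set \<Rightarrow> real"
  assumes G: "finite_graph V E" and fp: "fin_prob (MIS V E) \<mu>" and nu1: "nu_bi V E \<ge> 1"
begin

lemma nn: "\<forall>x. 0 \<le> \<mu> x" using fp unfolding fin_prob_def by auto
lemma fs: "finite {x. \<mu> x \<noteq> 0}" using fp unfolding fin_prob_def by auto
lemma s1: "sum \<mu> {x. \<mu> x \<noteq> 0} = 1" using fp unfolding fin_prob_def by auto
lemma spX: "{x. \<mu> x \<noteq> 0} \<subseteq> MIS V E" using fp unfolding fin_prob_def by auto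

lemma packing:
  assumes Y: "Y \<subseteq> MIS V E" and R: "R \<subseteq> V" and d0: "0 < \<delta>" "\<delta> \<le> 1/2"
    and sep: "\<And>r r'. r \<in> R \<Longrightarrow> r' \<in> R \<Longrightarrow> r \<noteq> r' \<Longrightarrow>
       meas \<mu> ((Fs r Y - Fs r' Y) \<union> (Fs r' Y - Fs r Y)) > \<delta>"
  shows "real (card R) \<le> (5 / \<delta>) ^ (2 * (nu_bi V E + 1))"
proof -
  let ?d = "nu_bi V E + 1"
  have finR: "finite R" using R finV[OF G] finite_subset by blast
  have q1: "5 / \<delta> \<ge> 1" using d0 by simp
  show ?thesis
  proof (cases "card R \<le> 1")
    case True
    then have "real (card R) \<le> 1" by simp
    also have "\<dots> \<le> (5 / \<delta>) ^ (2 * ?d)" using q1 by (rule one_le_power)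
    finally show ?thesis .
  next
    case False
    then have M2: "card R \<ge> 2" by simp
    define M where "M = card R"
    have Mr: "real M \<ge> 2" using M2 unfolding M_def by simp
    define I where "I = {(r, r'). r \<in> R \<and> r' \<in> R \<and> r \<noteq> r'}"
    define D where "D = (\<lambda>(r, r'). (Fs r Y - Fs r' Y) \<union> (Fs r' Y - Fs r Y))"
    have IRR: "I \<subseteq> R \<times> R" unfolding I_def by auto
    have finI: "finite I" using IRR finR finite_subset by blast
    obtain r0 where r0: "r0 \<in> R" using M2 by (metis card.empty not_numeral_le_zero ex_in_conv)
    have "(r0, r0) \<in> R \<times> R - I" using r0 unfolding I_def by auto
    then have "I \<subset> R \<times> R" using IRR by blast
    then have "card I < card (R \<times> R)" using finR by (intro psubset_card_mono) auto
    then have cI: "card I < M * M" unfolding M_def by (simp add: card_cartesian_product)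
    define k where "k = nat \<lceil>2 * ln (real M) / \<delta>\<rceil>"
    have lnM: "ln (real M) > 0" using Mr by simp
    have k1: "real k \<ge> 2 * ln (real M) / \<delta>" unfolding k_def by (rule real_nat_ceiling_ge)
    have k2: "real k \<le> 2 * ln (real M) / \<delta> + 1"
    proof -
      have "2 * ln (real M) / \<delta> \<ge> 0" using lnM d0 by simp
      then have "real k = real_of_int \<lceil>2 * ln (real M) / \<delta>\<rceil>" unfolding k_def by simp
      also have "\<dots> \<le> 2 * ln (real M) / \<delta> + 1" by linarith
      finally show ?thesis .
    qed
    have "(1 - \<delta>) ^ k \<le> exp (- \<delta>) ^ k"
      using d0 exp_ge_add_one_self[of "- \<delta>"] by (intro power_mono) auto
    also have "\<dots> = exp (real k * (- \<delta>))" by (rule exp_of_nat_mult[symmetric])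
    also have "\<dots> \<le> exp (- (2 * ln (real M)))"
    proof -
      have "real k * \<delta> \<ge> 2 * ln (real M)" using k1 d0 by (simp add: divide_le_eq mult.commute)
      then show ?thesis by simp
    qed
    also have "\<dots> = 1 / (real M * real M)"
    proof -
      have "exp (2 * ln (real M)) = exp (ln (real M)) ^ 2" using exp_of_nat_mult[of 2 "ln (real M)"] by simp
      also have "\<dots> = real M * real M" using Mr by (simp add: power2_eq_square)
      finally show ?thesis by (simp add: exp_minus inverse_eq_divide)
    qed
    finally have pw: "(1 - \<delta>) ^ k \<le> 1 / (real M * real M)" .
    have "real (card I) * (1 - \<delta>) ^ k \<le> real (card I) * (1 / (real M * real M))"
      using pw by (intro mult_left_mono) auto
    also have "\<dots> < 1" using cI Mr by (simp add: divide_less_eq) (metis of_nat_less_iff of_nat_mult)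
    finally have small: "real (card I) * (1 - \<delta>) ^ k < 1" .
    have Dbig: "\<forall>i\<in>I. meas \<mu> (D i) > \<delta>" unfolding I_def D_def using sep by auto
    obtain P where P: "P \<subseteq> {x. \<mu> x \<noteq> 0}" "card P \<le> k" "\<forall>i\<in>I. P \<inter> D i \<noteq> {}"
      using greedy_hit[OF nn fs s1 d0(1), of I D k] d0 finI Dbig small by auto
    define P' where "P' = P \<inter> Y"
    have finP: "finite P" using P(1) fs finite_subset by blast
    have finP': "finite P'" unfolding P'_def using finP by simp
    have cP': "card P' \<le> k" using P(2) card_mono[OF finP, of P'] unfolding P'_def by auto
    define tr where "tr r = Fs r Y \<inter> P'" for r
    have inj: "inj_on tr R"
    proof (rule inj_onI)
      fix r r' assume rr: "r \<in> R" "r' \<in> R" "tr r = tr r'"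
      show "r = r'"
      proof (rule ccontr)
        assume "r \<noteq> r'"
        then have "(r, r') \<in> I" using rr unfolding I_def by auto
        then obtain p where p: "p \<in> P" "p \<in> D (r, r')" using P(3) by blast
        then have "p \<in> Y" unfolding D_def Fs_def by auto
        then have "p \<in> P'" using p unfolding P'_def by auto
        then have "p \<in> tr r \<longleftrightarrow> p \<in> tr r'" using rr by simp
        then show False using p \<open>p \<in> P'\<close> unfolding tr_def D_def by auto
      qed
    qed
    define FF where "FF = tr ` R"
    have FFsub: "FF \<subseteq> Pow P'" unfolding FF_def tr_def by auto
    have cFF: "card FF = M" unfolding FF_def M_def using inj by (simp add: card_image)
    have noshat: "\<not> shatters FF Q" if Q: "Q \<subseteq> P'" "card Q = Suc ?d" for Q
    proof
      assume sh: "shatters FF Q"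
      have finQ: "finite Q" using Q(1) finP' finite_subset by blast
      obtain q where q: "bij_betw q {0..<card Q} Q" using ex_bij_betw_nat_finite[OF finQ] by blast
      have ex: "\<forall>a\<in>{0..<Suc ?d}. \<exists>r\<in>R. tr r \<inter> Q = Q - {q a}"
      proof
        fix a assume "a \<in> {0..<Suc ?d}"
        have "Q - {q a} \<subseteq> Q" by auto
        from sh[unfolded shatters_def, rule_format, OF this]
        have "\<exists>F\<in>FF. F \<inter> Q = Q - {q a}" .
        then obtain F where "F \<in> FF" "F \<inter> Q = Q - {q a}" by (elim bexE)
        then show "\<exists>r\<in>R. tr r \<inter> Q = Q - {q a}" unfolding FF_def by auto
      qed
      then obtain x where x: "\<forall>a\<in>{0..<Suc ?d}. x a \<in> R \<and> tr (x a) \<inter> Q = Q - {q a}"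
        by (metis (no_types, lifting) bchoice)
      have qQ: "q b \<in> Q" if "b < Suc ?d" for b using q that Q(2) by (auto simp: bij_betw_def)
      have qP': "q b \<in> P'" if "b < Suc ?d" for b using qQ[OF that] Q(1) by auto
      have qM: "q b \<in> MIS V E" if "b < Suc ?d" for b
        using qP'[OF that] P(1) spX unfolding P'_def by auto
      have pat: "x a \<in> q b \<longleftrightarrow> a \<noteq> b" if ab: "a < Suc ?d" "b < Suc ?d" for a b
      proof -
        have "q b \<in> tr (x a) \<longleftrightarrow> x a \<in> q b" using qP'[OF ab(2)] unfolding tr_def Fs_def P'_def by auto
        moreover have "q b \<in> tr (x a) \<longleftrightarrow> q b \<in> Q - {q a}"
        proof -
          have e: "tr (x a) \<inter> Q = Q - {q a}" using x ab(1) by auto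
          show ?thesis using e qQ[OF ab(2)] by blast
        qed
        moreover have "q b = q a \<longleftrightarrow> b = a"
          using q ab Q(2) unfolding bij_betw_def inj_on_def by auto
        ultimately show ?thesis using qQ[OF ab(2)] by auto
      qed
      have "bi_witness V E (Suc ?d)"
        by (rule pattern_bi[OF G, where J = q and x = x]) (use nu1 qM pat in auto)
      then have "Suc ?d \<le> nu_bi V E" by (rule bi_le_nu[OF G])
      then show False by simp
    qed
    have "card FF \<le> (\<Sum>i\<le>?d. card P' choose i)"
      by (rule sauer[OF finP' FFsub]) (use noshat in auto)
    also have "\<dots> \<le> (\<Sum>i\<le>?d. k choose i)" using cP' by (intro sum_mono binomial_right_mono)
    finally have "M \<le> (\<Sum>i\<le>?d. k choose i)" using cFF by simp
    then have "real M \<le> real (\<Sum>i\<le>?d. k choose i)" by (simp only: of_nat_le_iff)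
    also have "\<dots> \<le> (exp 1 * real (max k ?d) / real ?d) ^ ?d" by (rule sum_choose_bound) simp
    finally have Mb: "real M \<le> (exp 1 * real (max k ?d) / real ?d) ^ ?d" .
    have "real M \<le> (5 / \<delta>) ^ (2 * ?d)"
      by (rule pack_num[OF d0 _ M2[folded M_def] k2 Mb]) simp
    then show ?thesis unfolding M_def .
  qed
qed

end

context
  fixes V :: "'a set" and E :: "'a \<Rightarrow> 'a \<Rightarrow> bool" and \<mu> :: "'a set \<Rightarrow> real"
  assumes G: "finite_graph V E" and fp: "fin_prob (MIS V E) \<mu>"
begin

lemma nn': "\<forall>x. 0 \<le> \<mu> x" using fp unfolding fin_prob_def by auto
lemma fs': "finite {x. \<mu> x \<noteq> 0}" using fp unfolding fin_prob_def by auto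

lemma Kset_sub_Fs: "x \<in> S \<Longrightarrow> Kset V E S \<inter> Y \<subseteq> Fs x Y"
  unfolding Kset_def Fs_def by auto

lemma Aset_indep: assumes Y: "Y \<subseteq> MIS V E" shows "independent V E (Aset V \<mu> Y)"
  unfolding independent_def
proof (intro conjI ballI)
  show "Aset V \<mu> Y \<subseteq> V" unfolding Aset_def by auto
next
  fix x y assume x: "x \<in> Aset V \<mu> Y" and y: "y \<in> Aset V \<mu> Y"
  have "meas \<mu> (Fs x Y \<union> Fs y Y) \<le> meas \<mu> Y"
    using nn' fs' by (intro meas_mono) (auto simp: Fs_def)
  moreover have "meas \<mu> (Fs x Y \<union> Fs y Y) + meas \<mu> (Fs x Y \<inter> Fs y Y) = meas \<mu> (Fs x Y) + meas \<mu> (Fs y Y)"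
    using fs' by (rule meas_union_inter)
  moreover have "meas \<mu> (Fs x Y) > meas \<mu> Y / 2" "meas \<mu> (Fs y Y) > meas \<mu> Y / 2"
    using x y unfolding Aset_def by auto
  ultimately have "meas \<mu> (Fs x Y \<inter> Fs y Y) > 0" by linarith
  then obtain J where "J \<in> Fs x Y \<inter> Fs y Y" using meas_pos_ex by blast
  then have "J \<in> MIS V E" "x \<in> J" "y \<in> J" using Y unfolding Fs_def by auto
  then show "\<not> E x y" using MIS_D[OF G] by blast
qed

lemma tree:
  assumes d0: "0 < \<delta>"
    and Rb: "\<And>Y R. Y \<subseteq> MIS V E \<Longrightarrow> R \<subseteq> V \<Longrightarrow>
      (\<And>r r'. r \<in> R \<Longrightarrow> r' \<in> R \<Longrightarrow> r \<noteq> r' \<Longrightarrow> meas \<mu> ((Fs r Y - Fs r' Y) \<union> (Fs r' Y - Fs r Y)) > \<delta>)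
      \<Longrightarrow> card R \<le> B"
  shows "Y \<subseteq> MIS V E \<Longrightarrow> meas \<mu> Y < 2 ^ Suc n * (\<beta> - real n * \<delta>) \<Longrightarrow>
    \<exists>N \<subseteq> MIS V E. finite N \<and> card N \<le> (B + 1) ^ n \<and>
      (\<forall>S \<subseteq> V. meas \<mu> (Kset V E S \<inter> Y) \<ge> \<beta> \<longrightarrow> N \<inter> Kset V E S \<noteq> {})"
proof (induction n arbitrary: Y \<beta>)
  case 0
  obtain J0 where J0: "J0 \<in> MIS V E" "Aset V \<mu> Y \<subseteq> J0"
    using MIS_ext[OF G Aset_indep[OF "0.prems"(1)]] by blast
  show ?case
  proof (intro exI[of _ "{J0}"] conjI allI impI)
    fix S assume S: "S \<subseteq> V" "meas \<mu> (Kset V E S \<inter> Y) \<ge> \<beta>"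
    have "S \<subseteq> Aset V \<mu> Y"
    proof
      fix x assume x: "x \<in> S"
      have "meas \<mu> (Kset V E S \<inter> Y) \<le> meas \<mu> (Fs x Y)"
        using nn' fs' Kset_sub_Fs[OF x] by (rule meas_mono)
      then have "meas \<mu> (Fs x Y) > meas \<mu> Y / 2" using S "0.prems"(2) by simp
      then show "x \<in> Aset V \<mu> Y" using x S unfolding Aset_def by auto
    qed
    then have "J0 \<in> Kset V E S" using J0 unfolding Kset_def by auto
    then show "{J0} \<inter> Kset V E S \<noteq> {}" by auto
  qed (use J0 in auto)
next
  case (Suc n)
  obtain J0 where J0: "J0 \<in> MIS V E" "Aset V \<mu> Y \<subseteq> J0"
    using MIS_ext[OF G Aset_indep[OF Suc.prems(1)]] by blast
  define Light where "Light = {x\<in>V. meas \<mu> (Fs x Y) \<le> meas \<mu> Y / 2}"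
  have finL: "finite Light" unfolding Light_def using finV[OF G] by simp
  define dm where "dm c r = (meas \<mu> (Fs c Y - Fs r Y) \<le> \<delta>)" for c r
  have drefl: "dm c c" for c unfolding dm_def meas_def using d0 by simp
  have "\<exists>R\<subseteq>Light. (\<forall>c\<in>Light. \<exists>r\<in>R. dm c r) \<and> (\<forall>r\<in>R. \<forall>r'\<in>R. r \<noteq> r' \<longrightarrow> \<not> dm r r' \<or> \<not> dm r' r)"
    by (rule dominate[OF finL]) (rule drefl)
  then obtain R where R: "R \<subseteq> Light" "\<forall>c\<in>Light. \<exists>r\<in>R. dm c r"
    "\<forall>r\<in>R. \<forall>r'\<in>R. r \<noteq> r' \<longrightarrow> \<not> dm r r' \<or> \<not> dm r' r"
    by (elim exE conjE)
  have cR: "card R \<le> B"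
  proof (rule Rb[OF Suc.prems(1)])
    show "R \<subseteq> V" using R(1) unfolding Light_def by auto
    fix r r' assume rr: "r \<in> R" "r' \<in> R" "r \<noteq> r'"
    have m1: "meas \<mu> (Fs r Y - Fs r' Y) \<le> meas \<mu> ((Fs r Y - Fs r' Y) \<union> (Fs r' Y - Fs r Y))"
      using nn' fs' by (rule meas_mono) auto
    have m2: "meas \<mu> (Fs r' Y - Fs r Y) \<le> meas \<mu> ((Fs r Y - Fs r' Y) \<union> (Fs r' Y - Fs r Y))"
      using nn' fs' by (rule meas_mono) auto
    show "meas \<mu> ((Fs r Y - Fs r' Y) \<union> (Fs r' Y - Fs r Y)) > \<delta>"
      using R(3) rr m1 m2 unfolding dm_def by force
  qed
  have child: "\<exists>N \<subseteq> MIS V E. finite N \<and> card N \<le> (B + 1) ^ n \<and>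
      (\<forall>S \<subseteq> V. meas \<mu> (Kset V E S \<inter> Fs r Y) \<ge> \<beta> - \<delta> \<longrightarrow> N \<inter> Kset V E S \<noteq> {})"
    if r: "r \<in> R" for r
  proof (rule Suc.IH)
    show "Fs r Y \<subseteq> MIS V E" using Suc.prems(1) unfolding Fs_def by auto
    have "meas \<mu> (Fs r Y) \<le> meas \<mu> Y / 2" using R(1) r unfolding Light_def by auto
    also have "\<dots> < 2 ^ Suc n * (\<beta> - \<delta> - real n * \<delta>)"
      using Suc.prems(2) by (simp add: algebra_simps)
    finally show "meas \<mu> (Fs r Y) < 2 ^ Suc n * (\<beta> - \<delta> - real n * \<delta>)" .
  qed
  then obtain Nf where Nf: "\<forall>r\<in>R. Nf r \<subseteq> MIS V E \<and> finite (Nf r) \<and> card (Nf r) \<le> (B + 1) ^ n \<and>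
      (\<forall>S \<subseteq> V. meas \<mu> (Kset V E S \<inter> Fs r Y) \<ge> \<beta> - \<delta> \<longrightarrow> Nf r \<inter> Kset V E S \<noteq> {})"
    by metis
  have finR: "finite R" using R(1) finL finite_subset by blast
  define N where "N = insert J0 (\<Union>r\<in>R. Nf r)"
  show ?case
  proof (intro exI[of _ N] conjI allI impI)
    show "N \<subseteq> MIS V E" unfolding N_def using J0 Nf by auto
    show "finite N" unfolding N_def using Nf finR by auto
    have finU: "finite (\<Union>r\<in>R. Nf r)" using Nf finR by auto
    have "card N \<le> Suc (card (\<Union>r\<in>R. Nf r))" unfolding N_def using finU by (simp add: card_insert_if)
    also have "card (\<Union>r\<in>R. Nf r) \<le> (\<Sum>r\<in>R. card (Nf r))" using finR by (rule card_UN_le)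
    also have "\<dots> \<le> card R * (B + 1) ^ n" using Nf sum_bounded_above[of R "\<lambda>r. card (Nf r)" "(B+1)^n"] by auto
    also have "\<dots> \<le> B * (B + 1) ^ n" using cR by simp
    finally have "card N \<le> Suc (B * (B + 1) ^ n)" by simp
    also have "\<dots> \<le> (B + 1) ^ Suc n"
    proof -
      have "1 \<le> (B + 1) ^ n" by simp
      then show ?thesis by simp
    qed
    finally show "card N \<le> (B + 1) ^ Suc n" .
  next
    fix S assume S: "S \<subseteq> V" "meas \<mu> (Kset V E S \<inter> Y) \<ge> \<beta>"
    show "N \<inter> Kset V E S \<noteq> {}"
    proof (cases "S \<subseteq> Aset V \<mu> Y")
      case True
      then have "J0 \<in> Kset V E S" using J0 unfolding Kset_def by auto
      then show ?thesis unfolding N_def by auto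
    next
      case False
      then obtain x where x: "x \<in> S" "x \<notin> Aset V \<mu> Y" by auto
      then have "x \<in> Light" using S unfolding Light_def Aset_def by auto
      then obtain r where r: "r \<in> R" "dm x r" using R(2) by blast
      have sub: "Kset V E S \<inter> Y \<subseteq> (Kset V E S \<inter> Fs r Y) \<union> (Fs x Y - Fs r Y)"
        using Kset_sub_Fs[OF x(1)] unfolding Fs_def by auto
      have "\<beta> \<le> meas \<mu> (Kset V E S \<inter> Y)" by (rule S(2))
      also have "\<dots> \<le> meas \<mu> ((Kset V E S \<inter> Fs r Y) \<union> (Fs x Y - Fs r Y))"
        using nn' fs' sub by (rule meas_mono)
      also have "\<dots> \<le> meas \<mu> (Kset V E S \<inter> Fs r Y) + meas \<mu> (Fs x Y - Fs r Y)"
        using nn' fs' by (rule meas_union_le)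
      also have "\<dots> \<le> meas \<mu> (Kset V E S \<inter> Fs r Y) + \<delta>" using r(2) unfolding dm_def by simp
      finally have "meas \<mu> (Kset V E S \<inter> Fs r Y) \<ge> \<beta> - \<delta>" by simp
      then have "Nf r \<inter> Kset V E S \<noteq> {}" using Nf r(1) S(1) by blast
      then show ?thesis unfolding N_def using r(1) by blast
    qed
  qed
qed

end

lemma num_main:
  fixes m :: nat and L :: real
  assumes m2: "m \<ge> 2" and L: "L \<ge> (real m - 1) * ln 2"
  shows "real m * (ln (16 * real m) + L) \<le> 2 * L * (ln 480 + L)"
proof -
  define l where "l = ln (2::real)"
  have l1: "l \<ge> 2/3" unfolding l_def by (rule ln2_ge_two_thirds)
  have l2: "l \<le> 25/36" unfolding l_def by (rule ln2_le_25_over_36)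
  define p where "p = real m - 1"
  have p1: "p \<ge> 1" unfolding p_def using m2 by simp
  have mp: "real m = p + 1" unfolding p_def by simp
  have ln16: "ln (16::real) = 4 * l"
    unfolding l_def using ln_realpow[of "2::real" 4] by simp
  have ln480: "ln (480::real) \<ge> 8 * l"
  proof -
    have "ln (256::real) = 8 * l" unfolding l_def using ln_realpow[of "2::real" 8] by simp
    moreover have "ln (256::real) \<le> ln 480" by simp
    ultimately show ?thesis by simp
  qed
  have lnm16: "ln (16 * real m) = 4 * l + ln (real m)" using m2 ln16 by (simp add: ln_mult)
  define L0 where "L0 = p * l"
  have LL0: "L \<ge> L0" unfolding L0_def p_def l_def using L by simp
  have L00: "L0 \<ge> 0" unfolding L0_def using p1 l1 by simp
  have base: "(p + 1) * (4 * l + ln (real m) + L0) \<le> 2 * L0 * (8 * l + L0)"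
  proof (cases "m = 2")
    case True
    then have "p = 1" "ln (real m) = l" unfolding p_def l_def by simp_all
    moreover have "6 * l * (3 * l - 2) \<ge> 0" using l1 by simp
    moreover have "2 * (1 * l) * (8 * l + 1 * l) - (1 + 1) * (4 * l + l + 1 * l) = 6 * l * (3 * l - 2)"
      by (simp add: algebra_simps)
    ultimately show ?thesis unfolding L0_def by simp
  next
    case False
    then have p2: "p \<ge> 2" unfolding p_def using m2 by simp
    have "ln (real m / 8) \<le> real m / 8 - 1" using m2 by (intro ln_le_minus_one) simp
    moreover have "ln (real m / 8) = ln (real m) - 3 * l"
    proof -
      have "ln (8::real) = 3 * l" unfolding l_def using ln_realpow[of "2::real" 3] by simp
      then show ?thesis using m2 by (simp add: ln_div)
    qed
    ultimately have lnm: "ln (real m) \<le> (p + 1) / 8 + 3 * l - 1" using mp by simp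
    have A: "2 * l^2 - l - 1/8 \<ge> 0"
    proof -
      have "2 * l^2 - l = l * (2 * l - 1)" by (simp add: algebra_simps power2_eq_square)
      also have "\<dots> \<ge> (2/3) * (1/3)" using l1 by (intro mult_mono) auto
      finally show ?thesis by simp
    qed
    have B: "16 * l^2 - 8 * l + 3/4 \<ge> 2"
    proof -
      have "16 * l^2 - 8 * l = 8 * l * (2 * l - 1)" by (simp add: algebra_simps power2_eq_square)
      also have "\<dots> \<ge> 8 * (2/3) * (1/3)" using l1 by (intro mult_mono) auto
      finally show ?thesis by simp
    qed
    have C: "7/8 - 7 * l \<ge> -4" using l2 by simp
    have "(p + 1) * (4 * l + ln (real m) + L0) \<le> (p + 1) * (4 * l + ((p + 1) / 8 + 3 * l - 1) + L0)"
      using lnm p1 by (intro mult_left_mono) auto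
    also have "2 * L0 * (8 * l + L0) - (p + 1) * (4 * l + ((p + 1) / 8 + 3 * l - 1) + L0)
        = p^2 * (2 * l^2 - l - 1/8) + p * (16 * l^2 - 8 * l + 3/4) + (7/8 - 7 * l)"
      unfolding L0_def by (simp add: field_simps power2_eq_square)
    moreover have "p^2 * (2 * l^2 - l - 1/8) \<ge> 0" using A by simp
    moreover have "p * (16 * l^2 - 8 * l + 3/4) \<ge> 2 * 2" using B p2 by (intro mult_mono) auto
    ultimately show ?thesis using C by linarith
  qed
  have mono: "2 * L * (8 * l + L) - (p + 1) * (4 * l + ln (real m) + L)
      - (2 * L0 * (8 * l + L0) - (p + 1) * (4 * l + ln (real m) + L0))
      = (L - L0) * (16 * l + 2 * L + 2 * L0 - (p + 1))"
    by (simp add: algebra_simps)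
  have "16 * l + 2 * L + 2 * L0 - (p + 1) \<ge> 0"
  proof -
    have "2 * L + 2 * L0 \<ge> 4 * L0" using LL0 by simp
    moreover have "4 * L0 \<ge> 4 * p * (2/3)" unfolding L0_def using l1 p1 by simp
    ultimately show ?thesis using l1 p1 by linarith
  qed
  then have "(L - L0) * (16 * l + 2 * L + 2 * L0 - (p + 1)) \<ge> 0" using LL0 by simp
  then have "(p + 1) * (4 * l + ln (real m) + L) \<le> 2 * L * (8 * l + L)" using mono base by linarith
  also have "\<dots> \<le> 2 * L * (ln 480 + L)" using ln480 LL0 L00 by (intro mult_left_mono) auto
  finally show ?thesis using mp lnm16 by simp
qed

theorem theorem2p28:
  fixes V :: "'a set" and E :: "'a \<Rightarrow> 'a \<Rightarrow> bool" and \<epsilon> :: real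
  assumes "finite_graph V E" and "\<epsilon> > 0"
  shows "has_weak_eps_nets (MIS V E) (convex_space V E) \<epsilon>
           ((480 / \<epsilon>) powr (8 * real (nu_bi V E) * ln (1 / \<epsilon>)))"
proof -
  note G = assms(1) and e0 = assms(2)
  let ?X = "MIS V E" and ?F = "convex_space V E"
  let ?bd = "(480 / \<epsilon>) powr (8 * real (nu_bi V E) * ln (1 / \<epsilon>))"
  have bd0: "?bd \<ge> 0" by simp
  have KF: "\<exists>S\<subseteq>V. C = Kset V E S" if "C \<in> ?F" for C using that unfolding convex_space_def by auto
  have KX: "Kset V E S \<subseteq> ?X" for S unfolding Kset_def by auto
  show ?thesis unfolding has_weak_eps_nets_def
  proof (intro allI impI)
    fix \<mu> assume fp: "fin_prob ?X \<mu>"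
    have nnu: "\<forall>x. 0 \<le> \<mu> x" and fsu: "finite {x. \<mu> x \<noteq> 0}" and spXu: "{x. \<mu> x \<noteq> 0} \<subseteq> ?X"
      and s1u: "sum \<mu> {x. \<mu> x \<noteq> 0} = 1"
      using fp unfolding fin_prob_def by auto
    have measX: "meas \<mu> ?X = 1" using spXu s1u unfolding meas_def by (simp add: Int_absorb1)
    show "\<exists>N. finite N \<and> real (card N) \<le> ?bd \<and> weak_eps_net ?X ?F \<mu> \<epsilon> N"
    proof (cases "\<epsilon> > 1")
      case True
      show ?thesis
      proof (intro exI[of _ "{}"] conjI)
        show "weak_eps_net ?X ?F \<mu> \<epsilon> {}" unfolding weak_eps_net_def
        proof (intro conjI ballI impI)
          fix C assume "C \<in> ?F" "\<epsilon> \<le> meas \<mu> C"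
          then show "{} \<inter> C \<noteq> {}" using meas_le_one[OF fp, of C] True by linarith
        qed simp
      qed (use bd0 in auto)
    next
      case False
      then have e1: "\<epsilon> \<le> 1" by simp
      show ?thesis
      proof (cases "nu_bi V E = 0")
        case True
        have noE: "\<not> E a b" for a b
        proof
          assume ab: "E a b"
          have "bi_witness V E 1" unfolding bi_witness_def
            by (rule exI[of _ "\<lambda>_. a"], rule exI[of _ "\<lambda>_. b"])
               (use ab EV[OF G, of a b] irrE[OF G, of a] in \<open>auto simp: inj_on_def\<close>)
          then have "1 \<le> nu_bi V E" by (rule bi_le_nu[OF G])
          then show False using True by simp
        qed
        have indV: "independent V E V" unfolding independent_def using noE by auto
        have onlyV: "J = V" if "J \<in> ?X" for J
          using that indV MIS_D[OF G that] unfolding MIS_def by blast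
        have VX: "V \<in> ?X" unfolding MIS_def using indV by (auto simp: independent_def)
        show ?thesis
        proof (intro exI[of _ "{V}"] conjI)
          show "finite {V}" by simp
          have "?bd = 1" using True e0 by simp
          then show "real (card {V}) \<le> ?bd" by simp
          show "weak_eps_net ?X ?F \<mu> \<epsilon> {V}" unfolding weak_eps_net_def
          proof (intro conjI ballI impI)
            show "{V} \<subseteq> ?X" using VX by simp
            fix C assume C: "C \<in> ?F" "\<epsilon> \<le> meas \<mu> C"
            then have "meas \<mu> C > 0" using e0 by simp
            then obtain J where J: "J \<in> C" "\<mu> J \<noteq> 0" using meas_pos_ex by blast
            obtain S where "S \<subseteq> V" "C = Kset V E S" using KF[OF C(1)] by blast
            then have "J \<in> ?X" using J KX by blast
            then have "J = V" by (rule onlyV)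
            then show "{V} \<inter> C \<noteq> {}" using J by auto
          qed
        qed
      next
        case False
        then have nu1: "nu_bi V E \<ge> 1" by simp
        let ?d = "nu_bi V E + 1"
        define Bf where "Bf \<delta> = nat \<lfloor>(5 / \<delta>) ^ (2 * ?d)\<rfloor>" for \<delta> :: real
        have net: "\<exists>N. finite N \<and> card N \<le> (Bf \<delta> + 1) ^ n \<and> weak_eps_net ?X ?F \<mu> \<epsilon> N"
          if d0: "0 < \<delta>" "\<delta> \<le> 1/2" and big: "1 < 2 ^ Suc n * (\<epsilon> - real n * \<delta>)" for \<delta> n
        proof -
          have Rb: "card R \<le> Bf \<delta>" if "Y \<subseteq> ?X" "R \<subseteq> V"
            "\<And>r r'. r \<in> R \<Longrightarrow> r' \<in> R \<Longrightarrow> r \<noteq> r' \<Longrightarrow> meas \<mu> ((Fs r Y - Fs r' Y) \<union> (Fs r' Y - Fs r Y)) > \<delta>"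
            for Y R
          proof -
            have "real (card R) \<le> (5 / \<delta>) ^ (2 * ?d)"
              by (rule packing[OF G fp nu1 that(1,2) d0 that(3)])
            then show ?thesis unfolding Bf_def by (rule le_nat_floor)
          qed
          have T: "\<exists>N\<subseteq>?X. finite N \<and> card N \<le> (Bf \<delta> + 1) ^ n \<and>
            (\<forall>S\<subseteq>V. meas \<mu> (Kset V E S \<inter> ?X) \<ge> \<epsilon> \<longrightarrow> N \<inter> Kset V E S \<noteq> {})"
          proof (rule tree[OF G fp d0(1)])
            fix Y R assume "Y \<subseteq> ?X" "R \<subseteq> V"
              "\<And>r r'. r \<in> R \<Longrightarrow> r' \<in> R \<Longrightarrow> r \<noteq> r' \<Longrightarrow> meas \<mu> ((Fs r Y - Fs r' Y) \<union> (Fs r' Y - Fs r Y)) > \<delta>"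
            then show "card R \<le> Bf \<delta>" by (rule Rb)
          next
            show "?X \<subseteq> ?X" by simp
          next
            show "meas \<mu> ?X < 2 ^ Suc n * (\<epsilon> - real n * \<delta>)" using measX big by simp
          qed
          then obtain N where N: "N \<subseteq> ?X" "finite N" "card N \<le> (Bf \<delta> + 1) ^ n"
            "\<forall>S\<subseteq>V. meas \<mu> (Kset V E S \<inter> ?X) \<ge> \<epsilon> \<longrightarrow> N \<inter> Kset V E S \<noteq> {}"
            by (elim exE conjE)
          show ?thesis
          proof (intro exI[of _ N] conjI)
            show "weak_eps_net ?X ?F \<mu> \<epsilon> N" unfolding weak_eps_net_def
            proof (intro conjI ballI impI)
              show "N \<subseteq> ?X" by (rule N(1))
              fix C assume C: "C \<in> ?F" "\<epsilon> \<le> meas \<mu> C"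
              obtain S where S: "S \<subseteq> V" "C = Kset V E S" using KF[OF C(1)] by blast
              have "Kset V E S \<inter> ?X = Kset V E S" using KX by blast
              then show "N \<inter> C \<noteq> {}" using N(4) S C(2) by auto
            qed
          qed (use N in auto)
        qed
        show ?thesis
        proof (cases "\<epsilon> > 1/2")
          case True
          obtain N where N: "finite N" "card N \<le> (Bf (1/4) + 1) ^ 0" "weak_eps_net ?X ?F \<mu> \<epsilon> N"
            using net[of "1/4" 0] True by auto
          have "1 \<le> ?bd"
          proof (rule ge_one_powr_ge_zero)
            show "1 \<le> 480 / \<epsilon>" using e1 e0 by (simp add: le_divide_eq)
            have "ln (1 / \<epsilon>) \<ge> 0" using e1 e0 by simp
            then show "0 \<le> 8 * real (nu_bi V E) * ln (1 / \<epsilon>)" by simp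
          qed
          then show ?thesis using N by (intro exI[of _ N]) auto
        next
          case False
          then have eh: "\<epsilon> \<le> 1/2" by simp
          have "\<exists>m. 1 / \<epsilon> < 2 ^ m" by (rule real_arch_pow) simp
          define m where "m = (LEAST m. 1 / \<epsilon> < (2::real) ^ m)"
          have m1: "1 / \<epsilon> < 2 ^ m" unfolding m_def by (rule LeastI_ex) fact
          have m0: "\<not> (1 / \<epsilon> < 2 ^ m')" if "m' < m" for m'
            using that unfolding m_def by (rule not_less_Least)
          have ie2: "1 / \<epsilon> \<ge> 2" using eh e0 by (simp add: le_divide_eq)
          have m2: "m \<ge> 2"
          proof (rule ccontr)
            assume "\<not> m \<ge> 2"
            then have "m = 0 \<or> m = 1" by auto
            then show False using m1 ie2 by auto
          qed
          have mlow: "2 ^ (m - 1) \<le> 1 / \<epsilon>" using m0[of "m - 1"] m2 by simp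
          define L where "L = ln (1 / \<epsilon>)"
          have L0: "L \<ge> 0" unfolding L_def using ie2 by simp
          have Llow: "L \<ge> (real m - 1) * ln 2"
          proof -
            have "ln ((2::real) ^ (m - 1)) \<le> L" unfolding L_def using mlow e0 by (subst ln_le_cancel_iff) auto
            moreover have "ln ((2::real) ^ (m - 1)) = (real m - 1) * ln 2"
              using m2 by (simp add: ln_realpow of_nat_diff)
            ultimately show ?thesis by simp
          qed
          define \<delta> where "\<delta> = \<epsilon> / (2 * real m)"
          have dpos: "0 < \<delta>" unfolding \<delta>_def using e0 m2 by simp
          have dle: "\<delta> \<le> 1/2" unfolding \<delta>_def using eh m2 e0 by (simp add: divide_le_eq) 
          have "2 ^ Suc m * (\<epsilon> - real m * \<delta>) = 2 ^ m * \<epsilon>" unfolding \<delta>_def using m2 by (simp add: field_simps)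
          also have "\<dots> > 1" using m1 e0 by (simp add: divide_less_eq mult.commute)
          finally obtain N where N: "finite N" "card N \<le> (Bf \<delta> + 1) ^ m" "weak_eps_net ?X ?F \<mu> \<epsilon> N"
            using net[OF dpos dle] by blast
          define a where "a = (5 / \<delta>) ^ (2 * ?d)"
          have a1: "a \<ge> 1" unfolding a_def using dpos dle by (intro one_le_power) simp
          have Ba: "real (Bf \<delta>) \<le> a" unfolding Bf_def a_def using a1 a_def by simp
          have eq8: "(8 / \<delta>) ^ (2 * ?d) = (8/5) ^ (2 * ?d) * a" unfolding a_def using dpos
            by (simp add: power_mult_distrib[symmetric])
          moreover have "(8/5::real) ^ (2 * ?d) \<ge> (8/5) ^ 2" by (intro power_increasing) auto
          moreover have "(8/5::real) ^ 2 \<ge> 2" by (simp add: power2_eq_square)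
          ultimately have c2: "(8/5::real) ^ (2 * ?d) \<ge> 2" by linarith
          have h2: "(8/5::real) ^ (2 * ?d) * a \<ge> 2 * a" using c2 a1 by (intro mult_right_mono) auto
          have "(8 / \<delta>) ^ (2 * ?d) \<ge> 2 * a" by (subst eq8) (rule h2)
          then have B1: "real (Bf \<delta>) + 1 \<le> (8 / \<delta>) ^ (2 * ?d)" using Ba a1 by simp
          define w where "w = 16 * real m / \<epsilon>"
          have w8: "8 / \<delta> = w" unfolding w_def \<delta>_def using m2 by (simp add: field_simps)
          have w1: "w \<ge> 1" unfolding w_def using e0 e1 m2 by (simp add: le_divide_eq)
          have "real (card N) \<le> real ((Bf \<delta> + 1) ^ m)" using N(2) by (simp only: of_nat_le_iff)
          also have "\<dots> = (real (Bf \<delta>) + 1) ^ m" by (simp add: add.commute)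
          also have "\<dots> \<le> (w ^ (2 * ?d)) ^ m" using B1 w8 by (intro power_mono) auto
          also have "\<dots> = w ^ (2 * ?d * m)" by (rule power_mult[symmetric])
          also have "\<dots> \<le> w ^ (4 * nu_bi V E * m)" using w1 nu1 by (intro power_increasing) auto
          also have "\<dots> = exp (real (4 * nu_bi V E * m) * ln w)"
          proof -
            have "exp (real (4 * nu_bi V E * m) * ln w) = exp (ln w) ^ (4 * nu_bi V E * m)"
              by (rule exp_of_nat_mult)
            also have "exp (ln w) = w" using w1 by simp
            finally show ?thesis by simp
          qed
          also have "\<dots> \<le> exp (8 * real (nu_bi V E) * L * ln (480 / \<epsilon>))"
          proof -
            have lnw: "ln w = ln (16 * real m) + L" unfolding w_def L_def using e0 m2
              by (simp add: ln_div ln_mult)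
            have ln4: "ln (480 / \<epsilon>) = ln 480 + L" unfolding L_def using e0 by (simp add: ln_div)
            have "real m * (ln (16 * real m) + L) \<le> 2 * L * (ln 480 + L)" by (rule num_main[OF m2 Llow])
            then have "(4 * real (nu_bi V E)) * (real m * (ln (16 * real m) + L)) \<le> (4 * real (nu_bi V E)) * (2 * L * (ln 480 + L))"
              by (intro mult_left_mono) auto
            then show ?thesis unfolding lnw ln4 by (simp add: algebra_simps)
          qed
          also have "\<dots> = ?bd" unfolding L_def using e0 by (simp add: powr_def mult.commute)
          finally show ?thesis using N by blast
        qed
      qed
    qed
  qed
qed

end
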